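(* Let $\mathcal M$ be an oriented matroid on ground set $E$ and $e\in E$. (1) If $e$ is a loop, then $\mathcal M$ is pure if and only if $\mathcal M\setminus e$ is pure. (2) If $e$ is a coloop, then $\mathcal M$ is pure if and only if $\mathcal M/e$ is pure.
   Context: Oriented matroids are given by signed circuits $X=(X^+,X^-)$ on $E$. $e$ is a loop if $(\{e\},\emptyset)$ is a circuit; $e$ is a coloop if $e$ lies in the support $X^+\cup X^-$ of no circuit. Deletion $\mathcal M\setminus e$: circuits of $\mathcal M$ not containing $e$ in their support, on ground set $E\setminus\{e\}$. Contraction $\mathcal M/e$ (for $e$ not a loop): the circuits are the inclusion-minimal (w.r.t. $Y\le X$ iff $Y^+\subseteq X^+$ and $Y^-\subseteq X^-$) nonempty signed sets among $(X^+\setminus\{e\},X^-\setminus\{e\})$, $X$ a circuit of $\mathcal M$. Two subsets $I,J$ are separated if no circuit $X$ satisfies $X^+\subseteq I\setminus J$, $X^-\subseteq J\setminus I$; an oriented matroid is pure if every pairwise-separated collection maximal by inclusion has the maximum possible cardinality. *)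

theory Defs
  imports Main
begin

text \<open>A signed set is a pair (positive part, negative part).\<close>
type_synonym 'a sset = "'a set \<times> 'a set"

definition supp :: "'a sset \<Rightarrow> 'a set" where
  "supp X = fst X \<union> snd X"

definition sneg :: "'a sset \<Rightarrow> 'a sset" where
  "sneg X = (snd X, fst X)"

text \<open>Oriented matroid on finite ground set E given by its set of signed circuits
  (circuit axioms C0--C3, with weak elimination).\<close>
definition oriented_matroid :: "'a set \<Rightarrow> 'a sset set \<Rightarrow> bool" where
  "oriented_matroid E \<C> \<longleftrightarrow>
     finite E \<and>
     (\<forall>X\<in>\<C>. fst X \<inter> snd X = {} \<and> supp X \<subseteq> E) \<and>
     ({}, {}) \<notin> \<C> \<and>
     (\<forall>X\<in>\<C>. sneg X \<in> \<C>) \<and>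
     (\<forall>X\<in>\<C>. \<forall>Y\<in>\<C>. supp X \<subseteq> supp Y \<longrightarrow> X = Y \<or> X = sneg Y) \<and>
     (\<forall>X\<in>\<C>. \<forall>Y\<in>\<C>. \<forall>e. X \<noteq> sneg Y \<and> e \<in> fst X \<inter> snd Y \<longrightarrow>
        (\<exists>Z\<in>\<C>. fst Z \<subseteq> (fst X \<union> fst Y) - {e} \<and> snd Z \<subseteq> (snd X \<union> snd Y) - {e}))"

definition is_loop :: "'a sset set \<Rightarrow> 'a \<Rightarrow> bool" where
  "is_loop \<C> e \<longleftrightarrow> ({e}, {}) \<in> \<C>"

definition is_coloop :: "'a sset set \<Rightarrow> 'a \<Rightarrow> bool" where
  "is_coloop \<C> e \<longleftrightarrow> (\<forall>X\<in>\<C>. e \<notin> supp X)"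

definition sle :: "'a sset \<Rightarrow> 'a sset \<Rightarrow> bool" where
  "sle Y X \<longleftrightarrow> fst Y \<subseteq> fst X \<and> snd Y \<subseteq> snd X"

definition deletion :: "'a sset set \<Rightarrow> 'a \<Rightarrow> 'a sset set" where
  "deletion \<C> e = {X \<in> \<C>. e \<notin> supp X}"

definition contraction :: "'a sset set \<Rightarrow> 'a \<Rightarrow> 'a sset set" where
  "contraction \<C> e =
     (let S = {(fst X - {e}, snd X - {e}) | X. X \<in> \<C>} - {({}, {})}
      in {Y \<in> S. \<forall>Z\<in>S. sle Z Y \<longrightarrow> Z = Y})"

definition separated :: "'a sset set \<Rightarrow> 'a set \<Rightarrow> 'a set \<Rightarrow> bool" where
  "separated \<C> I J \<longleftrightarrow> \<not> (\<exists>X\<in>\<C>. fst X \<subseteq> I - J \<and> snd X \<subseteq> J - I)"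

definition sep_collection :: "'a set \<Rightarrow> 'a sset set \<Rightarrow> 'a set set \<Rightarrow> bool" where
  "sep_collection E \<C> \<S> \<longleftrightarrow>
     \<S> \<subseteq> Pow E \<and> (\<forall>I\<in>\<S>. \<forall>J\<in>\<S>. I \<noteq> J \<longrightarrow> separated \<C> I J)"

definition maximal_sep_collection :: "'a set \<Rightarrow> 'a sset set \<Rightarrow> 'a set set \<Rightarrow> bool" where
  "maximal_sep_collection E \<C> \<S> \<longleftrightarrow>
     sep_collection E \<C> \<S> \<and> (\<forall>\<T>. sep_collection E \<C> \<T> \<and> \<S> \<subseteq> \<T> \<longrightarrow> \<T> = \<S>)"

definition pure :: "'a set \<Rightarrow> 'a sset set \<Rightarrow> bool" where
  "pure E \<C> \<longleftrightarrow>
     (\<forall>\<S>. maximal_sep_collection E \<C> \<S> \<longrightarrow>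
        card \<S> = Max (card ` {\<T>. sep_collection E \<C> \<T>}))"

end

theory Submission
  imports Defs
begin

lemma abstract_pure:
  fixes P :: "'a set set \<Rightarrow> bool" and Q :: "'b set set \<Rightarrow> bool"
  assumes finP: "finite {S. P S}" and P0: "P {}"
    and finQ: "finite {T. Q T}" and Q0: "Q {}"
    and k: "k > (0::nat)"
    and F: "\<And>T. Q T \<Longrightarrow> P (F T) \<and> card (F T) = k * card T"
    and FM: "\<And>T. Q T \<and> (\<forall>T'. Q T' \<and> T \<subseteq> T' \<longrightarrow> T' = T) \<Longrightarrow>
                  (\<forall>S'. P S' \<and> F T \<subseteq> S' \<longrightarrow> S' = F T)"
    and GM: "\<And>S. P S \<and> (\<forall>S'. P S' \<and> S \<subseteq> S' \<longrightarrow> S' = S) \<Longrightarrow>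
                 Q (G S) \<and> (\<forall>T'. Q T' \<and> G S \<subseteq> T' \<longrightarrow> T' = G S) \<and> card S = k * card (G S)"
    and GB: "\<And>S. P S \<Longrightarrow> Q (G S) \<and> card S \<le> k * card (G S)"
  shows "(\<forall>S. P S \<and> (\<forall>S'. P S' \<and> S \<subseteq> S' \<longrightarrow> S' = S) \<longrightarrow> card S = Max (card ` {S. P S}))
     \<longleftrightarrow> (\<forall>T. Q T \<and> (\<forall>T'. Q T' \<and> T \<subseteq> T' \<longrightarrow> T' = T) \<longrightarrow> card T = Max (card ` {T. Q T}))"
proof -
  define mP where "mP = Max (card ` {S. P S})"
  define mQ where "mQ = Max (card ` {T. Q T})"
  have fP: "finite (card ` {S. P S})" and neP: "card ` {S. P S} \<noteq> {}" using finP P0 by auto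
  have fQ: "finite (card ` {T. Q T})" and neQ: "card ` {T. Q T} \<noteq> {}" using finQ Q0 by auto
  have leP: "\<And>S. P S \<Longrightarrow> card S \<le> mP" unfolding mP_def using fP by auto
  have leQ: "\<And>T. Q T \<Longrightarrow> card T \<le> mQ" unfolding mQ_def using fQ by auto
  obtain T0 where T0: "Q T0" "card T0 = mQ" using Max_in[OF fQ neQ] unfolding mQ_def by auto
  obtain S0 where S0: "P S0" "card S0 = mP" using Max_in[OF fP neP] unfolding mP_def by auto
  have "k * mQ \<le> mP" using F[OF T0(1)] leP T0(2) by metis
  moreover have "mP \<le> k * mQ"
  proof -
    have "mP \<le> k * card (G S0)" using GB[OF S0(1)] S0(2) by simp
    also have "\<dots> \<le> k * mQ" using GB[OF S0(1)] leQ by simp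
    finally show ?thesis .
  qed
  ultimately have eq: "mP = k * mQ" by simp
  show ?thesis unfolding mP_def[symmetric] mQ_def[symmetric]
  proof
    assume H: "\<forall>S. P S \<and> (\<forall>S'. P S' \<and> S \<subseteq> S' \<longrightarrow> S' = S) \<longrightarrow> card S = mP"
    show "\<forall>T. Q T \<and> (\<forall>T'. Q T' \<and> T \<subseteq> T' \<longrightarrow> T' = T) \<longrightarrow> card T = mQ"
    proof (intro allI impI)
      fix T assume m: "Q T \<and> (\<forall>T'. Q T' \<and> T \<subseteq> T' \<longrightarrow> T' = T)"
      have "card (F T) = mP" using H F[of T] FM[OF m] m by blast
      then have "k * card T = k * mQ" using F[of T] m eq by simp
      then show "card T = mQ" using k by simp
    qed
  next
    assume H: "\<forall>T. Q T \<and> (\<forall>T'. Q T' \<and> T \<subseteq> T' \<longrightarrow> T' = T) \<longrightarrow> card T = mQ"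
    show "\<forall>S. P S \<and> (\<forall>S'. P S' \<and> S \<subseteq> S' \<longrightarrow> S' = S) \<longrightarrow> card S = mP"
    proof (intro allI impI)
      fix S assume m: "P S \<and> (\<forall>S'. P S' \<and> S \<subseteq> S' \<longrightarrow> S' = S)"
      show "card S = mP" using GM[OF m] H eq by metis
    qed
  qed
qed

lemma sep_fin: "finite E \<Longrightarrow> finite {S. sep_collection E C S}"
  by (rule finite_subset[of _ "Pow (Pow E)"]) (auto simp: sep_collection_def)

lemma sep_empty: "sep_collection E C {}"
  by (simp add: sep_collection_def)

lemma contr_eq:
  assumes om: "oriented_matroid E C" and co: "is_coloop C e"
  shows "contraction C e = C"
proof -
  have S: "{(fst X - {e}, snd X - {e}) | X. X \<in> C} - {({}, {})} = C"
  proof -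
    have "(fst X - {e}, snd X - {e}) = X" if "X \<in> C" for X
      using co that by (auto simp: is_coloop_def supp_def prod_eq_iff)
    moreover have "({},{}) \<notin> C" using om by (simp add: oriented_matroid_def)
    ultimately show ?thesis by (auto simp del: prod.collapse) (metis (no_types, lifting) prod.collapse)+
  qed
  have min: "Z = Y" if "Y \<in> C" "Z \<in> C" "sle Z Y" for Y Z
  proof -
    have "supp Z \<subseteq> supp Y" using that(3) by (auto simp: sle_def supp_def)
    then have "Z = Y \<or> Z = sneg Y" using om that(1,2) unfolding oriented_matroid_def by blast
    moreover have "Z \<noteq> sneg Y"
    proof
      assume "Z = sneg Y"
      then have "snd Y \<subseteq> fst Y" "fst Y \<subseteq> snd Y" using that(3) by (auto simp: sle_def sneg_def)
      moreover have "fst Y \<inter> snd Y = {}" using om that(1) by (auto simp: oriented_matroid_def)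
      ultimately have "Y = ({},{})" by (auto simp: prod_eq_iff)
      then show False using om that(1) by (simp add: oriented_matroid_def)
    qed
    ultimately show ?thesis by blast
  qed
  show ?thesis unfolding contraction_def Let_def S using min by auto
qed

lemma sep_trace:
  assumes "\<forall>X\<in>C. e \<notin> supp X"
  shows "separated C I J \<longleftrightarrow> separated C (I-{e}) (J-{e})"
proof -
  have "fst X \<subseteq> I - J \<longleftrightarrow> fst X \<subseteq> (I-{e}) - (J-{e})" "snd X \<subseteq> J - I \<longleftrightarrow> snd X \<subseteq> (J-{e}) - (I-{e})"
    if "X \<in> C" for X using assms that by (auto simp: supp_def)
  then show ?thesis unfolding separated_def by blast
qed

lemma sep_same:
  assumes om: "oriented_matroid E C" and co: "is_coloop C e" and eq: "I-{e} = J-{e}"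
  shows "separated C I J"
  unfolding separated_def
proof
  assume "\<exists>X\<in>C. fst X \<subseteq> I - J \<and> snd X \<subseteq> J - I"
  then obtain X where X: "X \<in> C" "fst X \<subseteq> I - J" "snd X \<subseteq> J - I" by blast
  have "I - J \<subseteq> {e}" "J - I \<subseteq> {e}" using eq by blast+
  moreover have "e \<notin> fst X" "e \<notin> snd X" using co X(1) by (auto simp: is_coloop_def supp_def)
  ultimately have "X = ({},{})" using X by (auto simp: prod_eq_iff)
  then show False using om X(1) by (simp add: oriented_matroid_def)
qed

lemma coloop_part:
  assumes om: "oriented_matroid E C" and eE: "e \<in> E" and co: "is_coloop C e"
  shows "pure E C \<longleftrightarrow> pure (E - {e}) (contraction C e)"
proof -
  have fin: "finite E" using om by (simp add: oriented_matroid_def)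
  have nc: "\<forall>X\<in>C. e \<notin> supp X" using co by (simp add: is_coloop_def)
  define P where "P = sep_collection E C"
  define Q where "Q = sep_collection (E - {e}) C"
  define F where "F = (\<lambda>T::'a set set. T \<union> insert e ` T)"
  define G where "G = (\<lambda>S::'a set set. (\<lambda>I. I - {e}) ` S)"
  have Fmem: "I - {e} \<in> T" if "I \<in> F T" "T \<subseteq> Pow (E - {e})" for I T
  proof -
    from that(1) consider "I \<in> T" | K where "K \<in> T" "I = insert e K" unfolding F_def by blast
    then show ?thesis
    proof cases
      case 1 then have "e \<notin> I" using that(2) by blast
      then show ?thesis using 1 by simp
    next
      case 2 then have "e \<notin> K" using that(2) by blast
      then show ?thesis using 2 by simp
    qed
  qed
  have Fin: "I \<in> F T" if "I - {e} \<in> T" for I T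
  proof (cases "e \<in> I")
    case True then have "I = insert e (I - {e})" by blast
    then show ?thesis using that unfolding F_def by blast
  next
    case False then show ?thesis using that unfolding F_def by simp
  qed
  have GF: "G (F T) = T" if "T \<subseteq> Pow (E - {e})" for T
  proof
    show "G (F T) \<subseteq> T" using Fmem[OF _ that] unfolding G_def by blast
    show "T \<subseteq> G (F T)"
    proof
      fix K assume "K \<in> T"
      then have "K - {e} = K" "K \<in> F T" using that unfolding F_def by auto
      then show "K \<in> G (F T)" unfolding G_def by (metis image_eqI)
    qed
  qed
  have QT: "T \<subseteq> Pow (E - {e})" if "Q T" for T using that by (simp add: Q_def sep_collection_def)
  have Fok: "P (F T) \<and> card (F T) = 2 * card T" if "Q T" for T
  proof
    have T: "T \<subseteq> Pow (E - {e})" using QT[OF that] .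
    show "P (F T)" unfolding P_def sep_collection_def
    proof
      show "F T \<subseteq> Pow E" using T eE unfolding F_def by auto
      show "\<forall>I\<in>F T. \<forall>J\<in>F T. I \<noteq> J \<longrightarrow> separated C I J"
      proof (intro ballI impI)
        fix I J assume I: "I \<in> F T" and J: "J \<in> F T" and "I \<noteq> J"
        show "separated C I J"
        proof (cases "I - {e} = J - {e}")
          case True then show ?thesis by (rule sep_same[OF om co])
        next
          case False
          have QQ: "\<forall>I\<in>T. \<forall>J\<in>T. I \<noteq> J \<longrightarrow> separated C I J"
            using that unfolding Q_def sep_collection_def by simp
          have "separated C (I - {e}) (J - {e})"
            using QQ Fmem[OF I T] Fmem[OF J T] False by simp
          then show ?thesis using sep_trace[OF nc, of I J] by simp
        qed
      qed
    qed
    have finT: "finite T" proof (rule finite_subset[OF T])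
      show "finite (Pow (E - {e}))" using fin by simp
    qed
    have disj: "T \<inter> insert e ` T = {}" using T by auto
    have inj: "inj_on (insert e) T"
    proof (rule inj_onI)
      fix A B assume "A \<in> T" "B \<in> T" "insert e A = insert e B"
      moreover have "e \<notin> A" "e \<notin> B" using T \<open>A \<in> T\<close> \<open>B \<in> T\<close> by blast+
      ultimately show "A = B" by (metis Diff_insert_absorb)
    qed
    show "card (F T) = 2 * card T" unfolding F_def
      using card_Un_disjoint[OF finT _ disj] finT card_image[OF inj] by simp
  qed
  have Gok: "Q (G S)" if "P S" for S
    unfolding Q_def sep_collection_def
  proof
    show "G S \<subseteq> Pow (E - {e})" using that unfolding G_def P_def sep_collection_def by auto
    show "\<forall>I\<in>G S. \<forall>J\<in>G S. I \<noteq> J \<longrightarrow> separated C I J"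
    proof (intro ballI impI)
      fix I J assume "I \<in> G S" "J \<in> G S" "I \<noteq> J"
      then obtain I' J' where IJ: "I' \<in> S" "J' \<in> S" "I = I' - {e}" "J = J' - {e}" unfolding G_def by blast
      then have "I' \<noteq> J'" using \<open>I \<noteq> J\<close> by blast
      then have "separated C I' J'" using IJ(1,2) that unfolding P_def sep_collection_def by blast
      then show "separated C I J" using sep_trace[OF nc, of I' J'] IJ(3,4) by simp
    qed
  qed
  have SFG: "S \<subseteq> F (G S)" for S
  proof
    fix I assume "I \<in> S"
    then have "I - {e} \<in> G S" unfolding G_def by blast
    then show "I \<in> F (G S)" by (rule Fin)
  qed
  have PS: "S \<subseteq> Pow E" if "P S" for S using that by (simp add: P_def sep_collection_def)
  have "(\<forall>S. P S \<and> (\<forall>S'. P S' \<and> S \<subseteq> S' \<longrightarrow> S' = S) \<longrightarrow> card S = Max (card ` {S. P S}))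
     \<longleftrightarrow> (\<forall>T. Q T \<and> (\<forall>T'. Q T' \<and> T \<subseteq> T' \<longrightarrow> T' = T) \<longrightarrow> card T = Max (card ` {T. Q T}))"
  proof (rule abstract_pure[where F = F and G = G and k = 2])
    show "finite {S. P S}" "P {}" "finite {T. Q T}" "Q {}"
      using sep_fin sep_empty fin unfolding P_def Q_def by auto
    show "0 < (2::nat)" by simp
    show "\<And>T. Q T \<Longrightarrow> P (F T) \<and> card (F T) = 2 * card T" using Fok by blast
    show "\<forall>S'. P S' \<and> F T \<subseteq> S' \<longrightarrow> S' = F T"
      if m: "Q T \<and> (\<forall>T'. Q T' \<and> T \<subseteq> T' \<longrightarrow> T' = T)" for T
    proof (intro allI impI)
      fix S' assume S': "P S' \<and> F T \<subseteq> S'"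
      have "T = G (F T)" using GF QT m by simp
      also have "\<dots> \<subseteq> G S'" using S' unfolding G_def by blast
      finally have "G S' = T" using m Gok S' by blast
      then have "S' \<subseteq> F T" using SFG by metis
      then show "S' = F T" using S' by blast
    qed
    show "Q (G S) \<and> (\<forall>T'. Q T' \<and> G S \<subseteq> T' \<longrightarrow> T' = G S) \<and> card S = 2 * card (G S)"
      if m: "P S \<and> (\<forall>S'. P S' \<and> S \<subseteq> S' \<longrightarrow> S' = S)" for S
    proof -
      have eqS: "F (G S) = S" using m Fok[OF Gok] SFG by blast
      have "T' = G S" if "Q T'" "G S \<subseteq> T'" for T'
      proof -
        have "S \<subseteq> F T'" using eqS that(2) unfolding F_def by blast
        then have "F T' = S" using m Fok[OF that(1)] by blast
        then show ?thesis using GF QT that(1) by metis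
      qed
      then show ?thesis using Gok m eqS Fok[OF Gok[of S]] by metis
    qed
    show "Q (G S) \<and> card S \<le> 2 * card (G S)" if "P S" for S
    proof -
      have "finite (F (G S))" using PS[OF Fok[OF Gok[OF that], THEN conjunct1]] fin
        by (meson finite_Pow_iff finite_subset)
      then have "card S \<le> card (F (G S))" using SFG card_mono by blast
      then show ?thesis using Gok[OF that] Fok[OF Gok[OF that]] by simp
    qed
  qed
  then show ?thesis unfolding pure_def maximal_sep_collection_def contr_eq[OF om co] P_def Q_def .
qed


lemma loop_circ:
  assumes om: "oriented_matroid E C" and lp: "is_loop C e" and X: "X \<in> C" and eX: "e \<in> supp X"
  shows "X = ({e},{}) \<or> X = ({},{e})"
proof -
  have L: "({e},{}) \<in> C" using lp by (simp add: is_loop_def)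
  have "supp ({e},{}) \<subseteq> supp X" using eX by (simp add: supp_def)
  then have "({e},{}) = X \<or> ({e},{}) = sneg X" using om L X unfolding oriented_matroid_def by blast
  then show ?thesis by (cases X) (auto simp: sneg_def)
qed

lemma sep_loop:
  assumes om: "oriented_matroid E C" and lp: "is_loop C e"
  shows "separated C I J \<longleftrightarrow> (e \<in> I \<longleftrightarrow> e \<in> J) \<and> separated (deletion C e) (I - {e}) (J - {e})"
proof -
  have L1: "({e},{}) \<in> C" using lp by (simp add: is_loop_def)
  have L2: "({},{e}) \<in> C" using om L1 unfolding oriented_matroid_def sneg_def by force
  have nd: "\<forall>X\<in>deletion C e. e \<notin> supp X" by (simp add: deletion_def)
  have D: "separated (deletion C e) I J \<longleftrightarrow> separated (deletion C e) (I - {e}) (J - {e})"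
    by (rule sep_trace[OF nd])
  show ?thesis
  proof
    assume S: "separated C I J"
    have "e \<in> I \<longleftrightarrow> e \<in> J"
    proof (rule ccontr)
      assume "\<not> (e \<in> I \<longleftrightarrow> e \<in> J)"
      then have "(e \<in> I - J) \<or> (e \<in> J - I)" by blast
      then show False using S L1 L2 unfolding separated_def by fastforce
    qed
    moreover have "separated (deletion C e) I J" using S unfolding separated_def deletion_def by blast
    ultimately show "(e \<in> I \<longleftrightarrow> e \<in> J) \<and> separated (deletion C e) (I - {e}) (J - {e})" using D by simp
  next
    assume H: "(e \<in> I \<longleftrightarrow> e \<in> J) \<and> separated (deletion C e) (I - {e}) (J - {e})"
    then have SD: "separated (deletion C e) I J" using D by simp
    show "separated C I J" unfolding separated_def
    proof
      assume "\<exists>X\<in>C. fst X \<subseteq> I - J \<and> snd X \<subseteq> J - I"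
      then obtain X where X: "X \<in> C" "fst X \<subseteq> I - J" "snd X \<subseteq> J - I" by blast
      show False
      proof (cases "e \<in> supp X")
        case True
        then have "X = ({e},{}) \<or> X = ({},{e})" using loop_circ[OF om lp X(1)] by simp
        then show False using X H by auto
      next
        case False
        then have "X \<in> deletion C e" using X(1) by (simp add: deletion_def)
        then show False using SD X unfolding separated_def by blast
      qed
    qed
  qed
qed

lemma loop_part:
  assumes om: "oriented_matroid E C" and eE: "e \<in> E" and lp: "is_loop C e"
  shows "pure E C \<longleftrightarrow> pure (E - {e}) (deletion C e)"
proof -
  have fin: "finite E" using om by (simp add: oriented_matroid_def)
  define D where "D = deletion C e"
  have nd: "\<forall>X\<in>D. e \<notin> supp X" by (simp add: deletion_def D_def)
  have SL: "separated C I J \<longleftrightarrow> (e \<in> I \<longleftrightarrow> e \<in> J) \<and> separated D (I - {e}) (J - {e})" for I J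
    unfolding D_def by (rule sep_loop[OF om lp])
  define P where "P = sep_collection E C"
  define Q where "Q = sep_collection (E - {e}) D"
  define G where "G = (\<lambda>S::'a set set. (\<lambda>I. I - {e}) ` S)"
  have QT: "T \<subseteq> Pow (E - {e})" if "Q T" for T using that by (simp add: Q_def sep_collection_def)
  have QQ: "separated D I J" if "Q T" "I \<in> T" "J \<in> T" "I \<noteq> J" for T I J
    using that unfolding Q_def sep_collection_def by blast
  have PP: "separated C I J" if "P S" "I \<in> S" "J \<in> S" "I \<noteq> J" for S I J
    using that unfolding P_def sep_collection_def by blast
  have PS: "S \<subseteq> Pow E" if "P S" for S using that by (simp add: P_def sep_collection_def)
  have Fok: "P T" if "Q T" for T
    unfolding P_def sep_collection_def
  proof
    show "T \<subseteq> Pow E" using QT[OF that] by auto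
    show "\<forall>I\<in>T. \<forall>J\<in>T. I \<noteq> J \<longrightarrow> separated C I J"
    proof (intro ballI impI)
      fix I J assume IJ: "I \<in> T" "J \<in> T" "I \<noteq> J"
      have "e \<notin> I" "e \<notin> J" using QT[OF that] IJ by blast+
      then show "separated C I J" using SL[of I J] QQ[OF that IJ] by simp
    qed
  qed
  have Ltok: "P (insert e ` T)" if "Q T" for T
    unfolding P_def sep_collection_def
  proof
    show "insert e ` T \<subseteq> Pow E" using QT[OF that] eE by auto
    show "\<forall>I\<in>insert e ` T. \<forall>J\<in>insert e ` T. I \<noteq> J \<longrightarrow> separated C I J"
    proof (intro ballI impI)
      fix I J assume I: "I \<in> insert e ` T" and J: "J \<in> insert e ` T" and ne: "I \<noteq> J"
      obtain A B where AB: "A \<in> T" "B \<in> T" "I = insert e A" "J = insert e B" using I J by blast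
      have "e \<notin> A" "e \<notin> B" using QT[OF that] AB by blast+
      then have "I - {e} = A" "J - {e} = B" using AB by auto
      then have "A \<noteq> B" using ne AB by blast
      then show "separated C I J" using SL[of I J] QQ[OF that AB(1,2)] \<open>I - {e} = A\<close> \<open>J - {e} = B\<close> AB
        by simp
    qed
  qed
  have GL: "G (insert e ` T) = T" if "Q T" for T
  proof -
    have "\<forall>A\<in>T. insert e A - {e} = A" using QT[OF that] by blast
    then show ?thesis unfolding G_def image_image by simp
  qed
  have GT: "G T = T" if "Q T" for T
  proof -
    have "\<forall>A\<in>T. A - {e} = A" using QT[OF that] by blast
    then show ?thesis unfolding G_def by simp
  qed
  have agree: "e \<in> I \<longleftrightarrow> e \<in> J" if "P S" "I \<in> S" "J \<in> S" for S I J
    using PP[OF that] SL by (cases "I = J") auto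
  have inj: "inj_on (\<lambda>I. I - {e}) S" if "P S" for S
  proof (rule inj_onI)
    fix I J assume "I \<in> S" "J \<in> S" "I - {e} = J - {e}"
    then show "I = J" using agree[OF that \<open>I \<in> S\<close> \<open>J \<in> S\<close>] by blast
  qed
  have cardG: "card (G S) = card S" if "P S" for S unfolding G_def using card_image[OF inj[OF that]] .
  have Gok: "Q (G S)" if "P S" for S
    unfolding Q_def sep_collection_def
  proof
    show "G S \<subseteq> Pow (E - {e})" using PS[OF that] unfolding G_def by auto
    show "\<forall>I\<in>G S. \<forall>J\<in>G S. I \<noteq> J \<longrightarrow> separated D I J"
    proof (intro ballI impI)
      fix I J assume "I \<in> G S" "J \<in> G S" "I \<noteq> J"
      then obtain I' J' where IJ: "I' \<in> S" "J' \<in> S" "I = I' - {e}" "J = J' - {e}" unfolding G_def by blast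
      then have "I' \<noteq> J'" using \<open>I \<noteq> J\<close> by blast
      then have "separated C I' J'" using PP[OF that IJ(1,2)] by simp
      then show "separated D I J" using SL[of I' J'] IJ(3,4) by simp
    qed
  qed
  have Q1: "Q {{}}" unfolding Q_def sep_collection_def by simp
  have "(\<forall>S. P S \<and> (\<forall>S'. P S' \<and> S \<subseteq> S' \<longrightarrow> S' = S) \<longrightarrow> card S = Max (card ` {S. P S}))
     \<longleftrightarrow> (\<forall>T. Q T \<and> (\<forall>T'. Q T' \<and> T \<subseteq> T' \<longrightarrow> T' = T) \<longrightarrow> card T = Max (card ` {T. Q T}))"
  proof (rule abstract_pure[where F = "\<lambda>T. T" and G = G and k = 1])
    show "finite {S. P S}" "P {}" "finite {T. Q T}" "Q {}"
      using sep_fin sep_empty fin unfolding P_def Q_def by auto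
    show "0 < (1::nat)" by simp
    show "\<And>T. Q T \<Longrightarrow> P T \<and> card T = 1 * card T" using Fok by simp
    show "\<forall>S'. P S' \<and> T \<subseteq> S' \<longrightarrow> S' = T"
      if m: "Q T \<and> (\<forall>T'. Q T' \<and> T \<subseteq> T' \<longrightarrow> T' = T)" for T
    proof (intro allI impI)
      fix S' assume S': "P S' \<and> T \<subseteq> S'"
      have "T \<noteq> {}"
      proof
        assume "T = {}" then have "{{}} = T" using m Q1 by blast
        then show False using \<open>T = {}\<close> by simp
      qed
      then obtain K where K: "K \<in> T" by blast
      have eK: "e \<notin> K" using QT m K by blast
      have noe: "\<forall>I\<in>S'. e \<notin> I" using agree[of S' K] S' K eK by blast
      then have "G S' = S'" unfolding G_def by (simp add: Diff_insert_absorb)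
      moreover have "T \<subseteq> G S'" using S' GT m by (metis image_mono G_def)
      ultimately have "G S' = T" using m Gok S' by metis
      then show "S' = T" using \<open>G S' = S'\<close> by simp
    qed
    show "Q (G S) \<and> (\<forall>T'. Q T' \<and> G S \<subseteq> T' \<longrightarrow> T' = G S) \<and> card S = 1 * card (G S)"
      if m: "P S \<and> (\<forall>S'. P S' \<and> S \<subseteq> S' \<longrightarrow> S' = S)" for S
    proof -
      have "T' = G S" if T': "Q T'" "G S \<subseteq> T'" for T'
      proof (cases "\<exists>I\<in>S. e \<in> I")
        case True
        then obtain I0 where I0: "I0 \<in> S" "e \<in> I0" by blast
        have alle: "\<forall>I\<in>S. e \<in> I" using agree[of S I0] m I0 by blast
        have "S \<subseteq> insert e ` T'"
        proof
          fix I assume "I \<in> S"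
          then have "I = insert e (I - {e})" "I - {e} \<in> T'" using alle T'(2) unfolding G_def by auto
          then show "I \<in> insert e ` T'" by blast
        qed
        then have "insert e ` T' = S" using m Ltok[OF T'(1)] by blast
        then show ?thesis using GL[OF T'(1)] by simp
      next
        case False
        then have "G S = S" unfolding G_def by (simp add: Diff_insert_absorb)
        then have "T' = S" using m Fok[OF T'(1)] T'(2) by metis
        then show ?thesis using \<open>G S = S\<close> by simp
      qed
      then show ?thesis using Gok m cardG by simp
    qed
    show "Q (G S) \<and> card S \<le> 1 * card (G S)" if "P S" for S
      using Gok[OF that] cardG[OF that] by simp
  qed
  then show ?thesis unfolding pure_def maximal_sep_collection_def P_def Q_def D_def .
qed

theorem lemma8p1:
  fixes E :: "'a set" and \<C> :: "'a sset set" and e :: 'a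
  assumes "oriented_matroid E \<C>" and "e \<in> E"
  shows "(is_loop \<C> e \<longrightarrow> (pure E \<C> \<longleftrightarrow> pure (E - {e}) (deletion \<C> e)))
       \<and> (is_coloop \<C> e \<longrightarrow> (pure E \<C> \<longleftrightarrow> pure (E - {e}) (contraction \<C> e)))"
  using loop_part[OF assms] coloop_part[OF assms] by blast

end
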